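(* Assume $A$ is passive, i.e. $\operatorname{Re}(x^*Ax)<0$ for all nonzero $x\in\mathbb C^n$, that $F\succeq0$, and that $V_k$ has full column rank. Let $X_k=V_kT_k^{-1}V_k^*$ and $R_k=C^*C+A^*X_k+X_kA-X_kFX_k$. Define $$K_k:=(V_k^*V_k)^{-1}V_k^*A^*V_k,\qquad g_k:=(V_k^*V_k)^{-1}V_k^*C^*.$$ Then: (i) $V_k^*R_kV_k=0$ if and only if $g_k=T_k^{-1}\mathbf 1$. (ii) $V_k^*R_kV_k=0$ if and only if $\Lambda_k^*T_k+T_kK_k-V_k^*FV_k=0$. (iii) If $V_k^*R_kV_k=0$, then, after a suitable ordering, $\alpha_j=-\bar\lambda_j$ for $j=1,\dots,k$, where $\lambda_1,\dots,\lambda_k$ are the eigenvalues (with multiplicity) of $$(V_k^*V_k)^{-1}V_k^*\big(A^*-V_kT_k^{-1}V_k^*F\big)V_k .$$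
   Context: Let $A\in\mathbb C^{n\times n}$, let $C\in\mathbb C^{1\times n}$, and let $F\in\mathbb C^{n\times n}$ be Hermitian; $M^*$ denotes the conjugate transpose and $\succeq0$ denotes Hermitian positive semidefinite. Let $\alpha_1,\dots,\alpha_k\in\mathbb C$ be pairwise distinct with $\operatorname{Re}(\alpha_j)>0$ and $-A^*+\alpha_jI$ nonsingular. Set $$V_k=\big[(-A^*+\alpha_1I)^{-1}C^*,\dots,(-A^*+\alpha_kI)^{-1}C^*\big]\in\mathbb C^{n\times k},$$ $\Lambda_k=\operatorname{diag}(\alpha_1,\dots,\alpha_k)$, $\mathbf 1=[1,\dots,1]^T\in\mathbb R^k$, and let $T_k\in\mathbb C^{k\times k}$ be the matrix with entries $T_k(i,j)=\dfrac{1+(V_k^*FV_k)_{ij}}{\bar\alpha_i+\alpha_j}$, i.e. the unique solution of $\Lambda_k^*T+T\Lambda_k=V_k^*FV_k+\mathbf 1\mathbf 1^*$. Under these assumptions $T_k$ is Hermitian positive definite. *)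

theory Defs
  imports "Jordan_Normal_Form.Schur_Decomposition" "Jordan_Normal_Form.DL_Rank"
begin

text \<open>A total matrix inverse: the two-sided inverse of a square matrix when it
exists (unique), otherwise an arbitrary square matrix of the same size.\<close>
definition minv :: "complex mat \<Rightarrow> complex mat" where
  "minv M = (SOME B. B \<in> carrier_mat (dim_row M) (dim_row M) \<and> inverts_mat M B \<and> inverts_mat B M)"

abbreviation ctr :: "complex mat \<Rightarrow> complex mat" where
  "ctr M \<equiv> mat_adjoint M"

definition Vk :: "nat \<Rightarrow> nat \<Rightarrow> complex mat \<Rightarrow> complex mat \<Rightarrow> (nat \<Rightarrow> complex) \<Rightarrow> complex mat" where
  "Vk n k A C \<alpha> = mat n k (\<lambda>(i,j).
      (minv (- ctr A + \<alpha> j \<cdot>\<^sub>m 1\<^sub>m n) * ctr C) $$ (i, 0))"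

definition Lam :: "nat \<Rightarrow> (nat \<Rightarrow> complex) \<Rightarrow> complex mat" where
  "Lam k \<alpha> = mat k k (\<lambda>(i,j). if i = j then \<alpha> i else 0)"

definition Tk :: "nat \<Rightarrow> nat \<Rightarrow> complex mat \<Rightarrow> complex mat \<Rightarrow> complex mat \<Rightarrow> (nat \<Rightarrow> complex) \<Rightarrow> complex mat" where
  "Tk n k A C F \<alpha> = (let V = Vk n k A C \<alpha> in
      mat k k (\<lambda>(i,j). (1 + (ctr V * F * V) $$ (i,j)) / (cnj (\<alpha> i) + \<alpha> j)))"

definition ones :: "nat \<Rightarrow> complex mat" where
  "ones k = mat k 1 (\<lambda>_. 1)"

end

theory Submission
  imports Defs
begin


lemma ctr_carrier[simp]: "M \<in> carrier_mat m n \<Longrightarrow> ctr M \<in> carrier_mat n m"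
  unfolding mat_adjoint_def by auto
lemma ctr_dims[simp]: "dim_row (ctr M) = dim_col M" "dim_col (ctr M) = dim_row M"
  unfolding mat_adjoint_def by auto
lemma ctr_index[simp]: "i < dim_col M \<Longrightarrow> j < dim_row M \<Longrightarrow> ctr M $$ (i,j) = cnj (M $$ (j,i))"
  unfolding mat_adjoint_def by (simp add: mat_of_rows_index)
lemma ctr_ctr[simp]: "ctr (ctr M) = M"
  by (rule eq_matI, auto)
lemma ctr_mult: assumes "M \<in> carrier_mat m n" "N \<in> carrier_mat n p"
  shows "ctr (M * N) = ctr N * ctr M"
  by (rule eq_matI, insert assms, auto simp: scalar_prod_def intro!: sum.cong)
lemma ctr_add: assumes "M \<in> carrier_mat m n" "N \<in> carrier_mat m n"
  shows "ctr (M + N) = ctr M + ctr N"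
  by (rule eq_matI, insert assms, auto)
lemma ctr_minus: assumes "M \<in> carrier_mat m n" "N \<in> carrier_mat m n"
  shows "ctr (M - N) = ctr M - ctr N"
  by (rule eq_matI, insert assms, auto)
lemma ctr_uminus: "ctr (- M) = - ctr M"
  by (rule eq_matI, auto)

lemma adj_sprod: assumes M: "M \<in> carrier_mat m n" and x: "x \<in> carrier_vec n" and y: "y \<in> carrier_vec m"
  shows "(M *\<^sub>v x) \<bullet>c y = x \<bullet>c (ctr M *\<^sub>v y)"
proof -
  have "(M *\<^sub>v x) \<bullet>c y = (\<Sum>i<m. (\<Sum>j<n. M $$ (i,j) * x $ j) * cnj (y $ i))"
    using M x y by (auto simp: scalar_prod_def mult_mat_vec_def lessThan_atLeast0 intro!: sum.cong)
  also have "\<dots> = (\<Sum>j<n. x $ j * cnj (\<Sum>i<m. cnj (M $$ (i,j)) * y $ i))"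
    by (simp add: sum_distrib_left sum_distrib_right sum.swap[of _ "{..<n}"] mult.commute mult.left_commute)
  also have "\<dots> = x \<bullet>c (ctr M *\<^sub>v y)"
    using M x y by (auto simp: scalar_prod_def mult_mat_vec_def lessThan_atLeast0 intro!: sum.cong)
  finally show ?thesis .
qed

lemma minv_eq: assumes M: "M \<in> carrier_mat m m" and B: "B \<in> carrier_mat m m"
  and MB: "M * B = 1\<^sub>m m" and BM: "B * M = 1\<^sub>m m"
  shows "minv M = B"
proof -
  have ex: "\<exists>B. B \<in> carrier_mat (dim_row M) (dim_row M) \<and> inverts_mat M B \<and> inverts_mat B M"
    using assms by (auto simp: inverts_mat_def intro!: exI[of _ B])
  define B' where "B' = minv M"
  have B': "B' \<in> carrier_mat m m" "M * B' = 1\<^sub>m m" "B' * M = 1\<^sub>m m"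
    using someI_ex[OF ex] M unfolding B'_def minv_def inverts_mat_def by auto
  have "B' = B' * (M * B)" using B'(1) by (simp add: MB)
  also have "\<dots> = (B' * M) * B" using B'(1) M B by simp
  also have "\<dots> = B" by (subst B'(3)) (use B in simp)
  finally show ?thesis unfolding B'_def .
qed

lemma minv_det: assumes M: "M \<in> carrier_mat m m" and d: "det M \<noteq> 0"
  shows "minv M \<in> carrier_mat m m \<and> M * minv M = 1\<^sub>m m \<and> minv M * M = 1\<^sub>m m"
proof -
  from det_non_zero_imp_unit[OF M d, of "()"] obtain B where
    B: "B \<in> carrier_mat m m" "B * M = 1\<^sub>m m" "M * B = 1\<^sub>m m"
    unfolding Units_def ring_mat_def by auto
  then show ?thesis using minv_eq[OF M B(1) B(3) B(2)] by auto
qed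

lemma minv_inv: assumes M: "M \<in> carrier_mat m m" and i: "invertible_mat M"
  shows "minv M \<in> carrier_mat m m \<and> M * minv M = 1\<^sub>m m \<and> minv M * M = 1\<^sub>m m"
proof -
  from i obtain B where B: "M * B = 1\<^sub>m m" "B * M = 1\<^sub>m (dim_row B)"
    unfolding invertible_mat_def inverts_mat_def using M by auto
  have "dim_col B = m" using arg_cong[OF B(1), of dim_col] by simp
  moreover have "dim_row B = m" using arg_cong[OF B(2), of dim_col] M by simp
  ultimately have Bc: "B \<in> carrier_mat m m" by auto
  then show ?thesis using minv_eq[OF M Bc B(1)] B(1,2) Bc by auto
qed

lemma inj_det: assumes M: "(M :: complex mat) \<in> carrier_mat m m"
  and inj: "\<And>x. x \<in> carrier_vec m \<Longrightarrow> M *\<^sub>v x = 0\<^sub>v m \<Longrightarrow> x = 0\<^sub>v m"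
  shows "det M \<noteq> 0"
  using det_0_iff_vec_prod_zero_field[OF M] inj by auto

lemma prod_list_upt: "prod_list (map f [0..<k]) = (\<Prod>j<k. f j)"
  by (induct k) (auto simp: lessThan_Suc mult.commute)

lemma psd_kernel: assumes F: "F \<in> carrier_mat n n" and Fh: "ctr F = F"
  and psd: "\<forall>z \<in> carrier_vec n. 0 \<le> Re ((F *\<^sub>v z) \<bullet>c z)"
  and y: "y \<in> carrier_vec n" and q0: "Re ((F *\<^sub>v y) \<bullet>c y) = 0"
  shows "F *\<^sub>v y = 0\<^sub>v n"
proof -
  define w where "w = F *\<^sub>v y"
  have w: "w \<in> carrier_vec n" unfolding w_def using F y by auto
  define a where "a = Re (w \<bullet>c w)"
  define b where "b = Re ((F *\<^sub>v w) \<bullet>c w)"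
  have b0: "0 \<le> b" unfolding b_def using psd w by auto
  have wwge: "w \<bullet>c w \<ge> 0" by auto
  hence a0: "0 \<le> a" and wwIm: "Im (w \<bullet>c w) = 0" unfolding a_def by (auto simp: less_eq_complex_def)
  have exp: "Re ((F *\<^sub>v (y + complex_of_real t \<cdot>\<^sub>v w)) \<bullet>c (y + complex_of_real t \<cdot>\<^sub>v w))
      = 2 * t * a + t^2 * b" for t
  proof -
    let ?c = "complex_of_real t"
    have Fz: "F *\<^sub>v (y + ?c \<cdot>\<^sub>v w) = w + ?c \<cdot>\<^sub>v (F *\<^sub>v w)"
      using F y w by (simp add: mult_add_distrib_mat_vec[of _ n n] mult_mat_vec w_def)
    have cz: "conjugate (y + ?c \<cdot>\<^sub>v w) = conjugate y + ?c \<cdot>\<^sub>v conjugate w"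
      using y w by (simp add: conjugate_add_vec[of _ n] conjugate_smult_vec)
    have Fwc: "F *\<^sub>v w \<in> carrier_vec n" using F w by auto
    have e1: "(F *\<^sub>v w) \<bullet>c y = w \<bullet>c w"
      using adj_sprod[OF F w y] Fh w_def by simp
    have "(F *\<^sub>v (y + ?c \<cdot>\<^sub>v w)) \<bullet>c (y + ?c \<cdot>\<^sub>v w)
       = w \<bullet>c y + ?c * (w \<bullet>c w) + ?c * ((F *\<^sub>v w) \<bullet>c y) + ?c * ?c * ((F *\<^sub>v w) \<bullet>c w)"
      unfolding Fz cz using y w Fwc
      by (simp add: add_scalar_prod_distrib[of _ n] scalar_prod_add_distrib[of _ n] algebra_simps)
    also have "\<dots> = w \<bullet>c y + 2 * ?c * (w \<bullet>c w) + ?c * ?c * ((F *\<^sub>v w) \<bullet>c w)"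
      by (simp add: e1 algebra_simps)
    finally show ?thesis using q0 unfolding a_def b_def w_def by (simp add: power2_eq_square)
  qed
  have "a = 0"
  proof (rule ccontr)
    assume "a \<noteq> 0"
    hence apos: "a > 0" using a0 by simp
    define e where "e = a / (b + 1)"
    have epos: "e > 0" unfolding e_def using apos b0 by simp
    have "e * (b + 1) = a" unfolding e_def using b0 by simp
    hence "e * b < 2 * a" using epos apos by (simp add: algebra_simps)
    hence neg: "e * (e * b - 2 * a) < 0" using epos by (simp add: mult_pos_neg)
    have "0 \<le> 2 * (-e) * a + (-e)^2 * b" using psd exp[of "-e"] y w by (metis add_carrier_vec smult_carrier_vec)
    also have "\<dots> = e * (e * b - 2 * a)" by (simp add: algebra_simps power2_eq_square)
    finally show False using neg by simp
  qed
  hence "w \<bullet>c w = 0" using wwIm unfolding a_def by (simp add: complex_eq_iff)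
  thus ?thesis using w unfolding w_def by simp
qed


lemma ones_carrier[simp]: "ones k \<in> carrier_mat k 1" unfolding ones_def by auto
lemma Lam_carrier[simp]: "Lam k \<alpha> \<in> carrier_mat k k" unfolding Lam_def by auto

lemma Lam_dims[simp]: "dim_row (Lam k \<alpha>) = k" "dim_col (Lam k \<alpha>) = k" unfolding Lam_def by auto
lemma ones_dims[simp]: "dim_row (ones k) = k" "dim_col (ones k) = 1" unfolding ones_def by auto

lemma mult_zero_vec_mat[simp]: "dim_col A = k \<Longrightarrow> A *\<^sub>v 0\<^sub>v k = (0\<^sub>v (dim_row A) :: complex vec)"
  by (rule eq_vecI) (auto simp: mult_mat_vec_def scalar_prod_def)

lemma Lam_vec: assumes x: "x \<in> carrier_vec k"
  shows "Lam k \<alpha> *\<^sub>v x = vec k (\<lambda>i. \<alpha> i * x $ i)"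
proof (rule eq_vecI)
  fix i assume "i < dim_vec (vec k (\<lambda>i. \<alpha> i * x $ i))"
  hence i: "i < k" by simp
  have "(Lam k \<alpha> *\<^sub>v x) $ i = (\<Sum>l\<in>{0..<k}. (if i = l then \<alpha> i else 0) * x $ l)"
    using i x by (simp add: Lam_def mult_mat_vec_def scalar_prod_def row_def)
  also have "\<dots> = (\<Sum>l\<in>{0..<k}. if l = i then \<alpha> i * x $ i else 0)" by (rule sum.cong) auto
  also have "\<dots> = \<alpha> i * x $ i" using i by simp
  finally show "(Lam k \<alpha> *\<^sub>v x) $ i = vec k (\<lambda>i. \<alpha> i * x $ i) $ i" using i by simp
qed (insert x, auto simp: Lam_def)

lemma ones_vec: assumes x: "x \<in> carrier_vec k"
  shows "(ctr (ones k) *\<^sub>v x) $ 0 = (\<Sum>i<k. x $ i)"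
  using x by (simp add: ones_def mult_mat_vec_def scalar_prod_def row_def lessThan_atLeast0)

lemma T_kernel:
  fixes T V F :: "complex mat"
  assumes T: "T \<in> carrier_mat k k" and Th: "ctr T = T" and V: "V \<in> carrier_mat n k"
    and F: "F \<in> carrier_mat n n" and Fh: "ctr F = F"
    and psd: "\<forall>z \<in> carrier_vec n. 0 \<le> Re ((F *\<^sub>v z) \<bullet>c z)"
    and dist: "\<forall>i<k. \<forall>j<k. i \<noteq> j \<longrightarrow> \<alpha> i \<noteq> \<alpha> j"
    and lyap: "ctr (Lam k \<alpha>) * T + T * Lam k \<alpha> = ctr V * F * V + ones k * ctr (ones k)"
  shows "x \<in> carrier_vec k \<Longrightarrow> T *\<^sub>v x = 0\<^sub>v k \<Longrightarrow> x = 0\<^sub>v k"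
proof -
  let ?L = "Lam k \<alpha>" and ?o = "ones k"
  have Lc: "?L \<in> carrier_mat k k" by simp
  have oc: "?o \<in> carrier_mat k 1" by (rule ones_carrier)
  have ker: "ctr ?o *\<^sub>v x = 0\<^sub>v 1 \<and> T *\<^sub>v (?L *\<^sub>v x) = 0\<^sub>v k"
    if x: "x \<in> carrier_vec k" and Tx: "T *\<^sub>v x = 0\<^sub>v k" for x
  proof -
    define y where "y = V *\<^sub>v x"
    define s where "s = ctr ?o *\<^sub>v x"
    have y: "y \<in> carrier_vec n" unfolding y_def using V x by auto
    have s: "s \<in> carrier_vec 1" unfolding s_def by (rule mult_mat_vec_carrier[OF ctr_carrier[OF ones_carrier] x])
    have Lx: "?L *\<^sub>v x \<in> carrier_vec k" by (rule mult_mat_vec_carrier[OF Lc x])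
    have Fy: "F *\<^sub>v y \<in> carrier_vec n" using F y by auto
    have Lhc: "ctr ?L \<in> carrier_mat k k" using Lc by simp
    have Vhc: "ctr V \<in> carrier_mat k n" using V by simp
    have ohc: "ctr ?o \<in> carrier_mat 1 k" using oc by simp
    have "(ctr ?L * T + T * ?L) *\<^sub>v x = (ctr ?L * T) *\<^sub>v x + (T * ?L) *\<^sub>v x"
      by (rule add_mult_distrib_mat_vec[OF mult_carrier_mat[OF Lhc T] mult_carrier_mat[OF T Lc] x])
    also have "\<dots> = ctr ?L *\<^sub>v (T *\<^sub>v x) + T *\<^sub>v (?L *\<^sub>v x)"
      using assoc_mult_mat_vec[OF Lhc T x] assoc_mult_mat_vec[OF T Lc x] by simp
    also have "\<dots> = T *\<^sub>v (?L *\<^sub>v x)" using Tx Lhc T Lx by simp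
    finally have lhs: "(ctr ?L * T + T * ?L) *\<^sub>v x = T *\<^sub>v (?L *\<^sub>v x)" .
    have "(ctr V * F * V + ?o * ctr ?o) *\<^sub>v x = (ctr V * F * V) *\<^sub>v x + (?o * ctr ?o) *\<^sub>v x"
      by (rule add_mult_distrib_mat_vec[OF mult_carrier_mat[OF mult_carrier_mat[OF Vhc F] V] mult_carrier_mat[OF oc ohc] x])
    also have "\<dots> = ctr V *\<^sub>v (F *\<^sub>v y) + ?o *\<^sub>v s"
      unfolding y_def s_def
      using assoc_mult_mat_vec[OF mult_carrier_mat[OF Vhc F] V x] assoc_mult_mat_vec[OF Vhc F mult_mat_vec_carrier[OF V x]]
        assoc_mult_mat_vec[OF oc ohc x] by simp
    finally have rhs: "(ctr V * F * V + ?o * ctr ?o) *\<^sub>v x = ctr V *\<^sub>v (F *\<^sub>v y) + ?o *\<^sub>v s" .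
    have main: "T *\<^sub>v (?L *\<^sub>v x) = ctr V *\<^sub>v (F *\<^sub>v y) + ?o *\<^sub>v s"
      using lhs rhs lyap by simp
    have z0: "(T *\<^sub>v (?L *\<^sub>v x)) \<bullet>c x = 0"
      using adj_sprod[OF T Lx x] Th Tx scalar_prod_right_zero[OF Lx] by simp
    have e1: "(T *\<^sub>v (?L *\<^sub>v x)) \<bullet>c x = (ctr V *\<^sub>v (F *\<^sub>v y)) \<bullet>c x + (?o *\<^sub>v s) \<bullet>c x"
      unfolding main by (rule add_scalar_prod_distrib[OF mult_mat_vec_carrier[OF Vhc Fy] mult_mat_vec_carrier[OF oc s]]) (use x in simp)
    have e2: "(ctr V *\<^sub>v (F *\<^sub>v y)) \<bullet>c x = (F *\<^sub>v y) \<bullet>c y"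
      using adj_sprod[OF Vhc Fy x] unfolding y_def by simp
    have e3: "(?o *\<^sub>v s) \<bullet>c x = s \<bullet>c s"
      using adj_sprod[OF oc s x] unfolding s_def by simp
    have sum0: "(F *\<^sub>v y) \<bullet>c y + s \<bullet>c s = 0" using z0 e1 e2 e3 by simp
    have ss: "s \<bullet>c s \<ge> 0" by auto
    hence ssR: "0 \<le> Re (s \<bullet>c s)" "Im (s \<bullet>c s) = 0" by (auto simp: less_eq_complex_def)
    have fR: "0 \<le> Re ((F *\<^sub>v y) \<bullet>c y)" using psd y by auto
    from sum0 have "Re ((F *\<^sub>v y) \<bullet>c y) + Re (s \<bullet>c s) = 0" by (metis plus_complex.simps(1) zero_complex.simps(1))
    hence r1: "Re ((F *\<^sub>v y) \<bullet>c y) = 0" and r2: "Re (s \<bullet>c s) = 0" using ssR fR by linarith+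
    have "s \<bullet>c s = 0" using r2 ssR by (simp add: complex_eq_iff)
    hence s0: "s = 0\<^sub>v 1" using s by simp
    have Fy0: "F *\<^sub>v y = 0\<^sub>v n" using psd_kernel[OF F Fh psd y r1] .
    have "T *\<^sub>v (?L *\<^sub>v x) = 0\<^sub>v k" unfolding main Fy0 s0 using V oc by simp
    with s0 show ?thesis unfolding s_def by simp
  qed
  have ind: "finite S \<Longrightarrow> \<forall>x \<in> carrier_vec k. T *\<^sub>v x = 0\<^sub>v k \<longrightarrow> (\<forall>i<k. i \<notin> S \<longrightarrow> x $ i = 0) \<longrightarrow> x = 0\<^sub>v k" for S
  proof (induct S rule: finite_induct)
    case empty
    then show ?case by (auto intro!: eq_vecI)
  next
    case (insert j S)
    show ?case
    proof (intro ballI impI)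
      fix x :: "complex vec" assume x: "x \<in> carrier_vec k" and Tx: "T *\<^sub>v x = 0\<^sub>v k"
        and sup: "\<forall>i<k. i \<notin> insert j S \<longrightarrow> x $ i = 0"
      show "x = 0\<^sub>v k"
      proof (cases "j < k")
        case False
        then show ?thesis using insert(3) x Tx sup by auto
      next
        case True
        define z where "z = ?L *\<^sub>v x - \<alpha> j \<cdot>\<^sub>v x"
        have z: "z \<in> carrier_vec k" unfolding z_def
          by (rule minus_carrier_vec[OF mult_mat_vec_carrier[OF Lc x]]) (use x in simp)
        have zi: "i < k \<Longrightarrow> z $ i = (\<alpha> i - \<alpha> j) * x $ i" for i
          unfolding z_def using x by (simp add: Lam_vec algebra_simps)
        have "T *\<^sub>v z = T *\<^sub>v (?L *\<^sub>v x) - \<alpha> j \<cdot>\<^sub>v (T *\<^sub>v x)"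
          unfolding z_def mult_minus_distrib_mat_vec[OF T mult_mat_vec_carrier[OF Lc x] smult_carrier_vec[THEN iffD2, OF x]]
            mult_mat_vec[OF T x] ..
        hence Tz: "T *\<^sub>v z = 0\<^sub>v k" using ker[OF x Tx] Tx by (auto intro!: eq_vecI)
        have "\<forall>i<k. i \<notin> S \<longrightarrow> z $ i = 0" using sup zi by auto
        hence z0: "z = 0\<^sub>v k" using insert(3) z Tz by auto
        have xi: "i < k \<Longrightarrow> i \<noteq> j \<Longrightarrow> x $ i = 0" for i
          using zi[of i] z0 dist True by auto
        have "(ctr ?o *\<^sub>v x) $ 0 = x $ j"
          unfolding ones_vec[OF x] using xi True
          by (subst sum.remove[of _ j]) (auto intro!: sum.neutral)
        hence xj: "x $ j = 0" using ker[OF x Tx] by simp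
        show ?thesis
        proof (rule eq_vecI)
          fix i assume "i < dim_vec (0\<^sub>v k)"
          then show "x $ i = 0\<^sub>v k $ i" using xi xj by (cases "i = j") auto
        qed (use x in simp)
      qed
    qed
  qed
  show "x \<in> carrier_vec k \<Longrightarrow> T *\<^sub>v x = 0\<^sub>v k \<Longrightarrow> x = 0\<^sub>v k"
    using ind[of "{..<k}"] by auto
qed


context fixes A B C :: "complex mat" begin
lemma d_assoc: "dim_col A = dim_row B \<Longrightarrow> dim_col B = dim_row C \<Longrightarrow> A * B * C = A * (B * C)"
  by (rule assoc_mult_mat[of A "dim_row A" "dim_col A" B "dim_col B" C "dim_col C"]) auto
lemma d_dl: "dim_row A = dim_row B \<Longrightarrow> dim_col A = dim_col B \<Longrightarrow> dim_col A = dim_row C \<Longrightarrow> (A + B) * C = A * C + B * C"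
  by (rule add_mult_distrib_mat[of A "dim_row A" "dim_col A" B C "dim_col C"]) auto
lemma d_dr: "dim_row A = dim_row B \<Longrightarrow> dim_col A = dim_col B \<Longrightarrow> dim_col C = dim_row A \<Longrightarrow> C * (A + B) = C * A + C * B"
  by (rule mult_add_distrib_mat[of C "dim_row C" "dim_col C" A "dim_col A" B]) auto
lemma d_minus: "dim_row A = dim_row B \<Longrightarrow> dim_col A = dim_col B \<Longrightarrow> A - B = A + - B"
  by (rule minus_add_uminus_mat[of A "dim_row A" "dim_col A" B]) auto
lemma d_uml: "dim_col A = dim_row B \<Longrightarrow> - A * B = - (A * B)" by simp
lemma d_umr: "dim_col A = dim_row B \<Longrightarrow> A * - B = - (A * B)" by simp
lemma d_uadd: "dim_row A = dim_row B \<Longrightarrow> dim_col A = dim_col B \<Longrightarrow> - (A + B) = - A + - B"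
  by (rule eq_matI) auto
lemma d_comm: "dim_row A = dim_row B \<Longrightarrow> dim_col A = dim_col B \<Longrightarrow> A + B = B + A"
  by (rule eq_matI) auto
lemma d_aassoc: "dim_row A = dim_row B \<Longrightarrow> dim_col A = dim_col B \<Longrightarrow> dim_row B = dim_row C \<Longrightarrow> dim_col B = dim_col C \<Longrightarrow> A + B + C = A + (B + C)"
  by (rule eq_matI) auto
lemma d_lcomm: "dim_row A = dim_row B \<Longrightarrow> dim_col A = dim_col B \<Longrightarrow> dim_row B = dim_row C \<Longrightarrow> dim_col B = dim_col C \<Longrightarrow> A + (B + C) = B + (A + C)"
  by (rule eq_matI) auto
lemma d_cancel1: "dim_row A = dim_row B \<Longrightarrow> dim_col A = dim_col B \<Longrightarrow> A + (- A + B) = B"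
  by (rule eq_matI) auto
lemma d_cancel2: "dim_row A = dim_row B \<Longrightarrow> dim_col A = dim_col B \<Longrightarrow> - A + (A + B) = B"
  by (rule eq_matI) auto
lemma d_cancel3: "A + - A = 0\<^sub>m (dim_row A) (dim_col A)" "- A + A = 0\<^sub>m (dim_row A) (dim_col A)"
  by (rule eq_matI, auto)+
lemma d_zero: "dim_row A = r \<Longrightarrow> dim_col A = c \<Longrightarrow> A + 0\<^sub>m r c = A"
   "dim_row A = r \<Longrightarrow> dim_col A = c \<Longrightarrow> 0\<^sub>m r c + A = A"
  by (rule eq_matI, auto)+
lemma d_one: "dim_row A = r \<Longrightarrow> 1\<^sub>m r * A = A" "dim_col A = r \<Longrightarrow> A * 1\<^sub>m r = A" by auto
lemma d_uu: "- (- A) = A" by simp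
end


context fixes A B1 B2 B3 B4 B5 R :: "complex mat" begin
lemma d_far_1: "dim_row B1 = dim_row A \<Longrightarrow> dim_col B1 = dim_col A \<Longrightarrow> (A + (B1 + - A)) = B1" by (rule eq_matI) auto
lemma d_far_2: "dim_row B1 = dim_row A \<Longrightarrow> dim_col B1 = dim_col A \<Longrightarrow> (- A + (B1 + A)) = B1" by (rule eq_matI) auto
lemma d_far_3: "dim_row B1 = dim_row A \<Longrightarrow> dim_col B1 = dim_col A \<Longrightarrow> dim_row R = dim_row A \<Longrightarrow> dim_col R = dim_col A \<Longrightarrow> (A + (B1 + (- A + R))) = (B1 + R)" by (rule eq_matI) auto
lemma d_far_4: "dim_row B1 = dim_row A \<Longrightarrow> dim_col B1 = dim_col A \<Longrightarrow> dim_row R = dim_row A \<Longrightarrow> dim_col R = dim_col A \<Longrightarrow> (- A + (B1 + (A + R))) = (B1 + R)" by (rule eq_matI) auto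
lemma d_far_5: "dim_row B1 = dim_row A \<Longrightarrow> dim_col B1 = dim_col A \<Longrightarrow> dim_row B2 = dim_row A \<Longrightarrow> dim_col B2 = dim_col A \<Longrightarrow> (A + (B1 + (B2 + - A))) = (B1 + B2)" by (rule eq_matI) auto
lemma d_far_6: "dim_row B1 = dim_row A \<Longrightarrow> dim_col B1 = dim_col A \<Longrightarrow> dim_row B2 = dim_row A \<Longrightarrow> dim_col B2 = dim_col A \<Longrightarrow> (- A + (B1 + (B2 + A))) = (B1 + B2)" by (rule eq_matI) auto
lemma d_far_7: "dim_row B1 = dim_row A \<Longrightarrow> dim_col B1 = dim_col A \<Longrightarrow> dim_row B2 = dim_row A \<Longrightarrow> dim_col B2 = dim_col A \<Longrightarrow> dim_row R = dim_row A \<Longrightarrow> dim_col R = dim_col A \<Longrightarrow> (A + (B1 + (B2 + (- A + R)))) = (B1 + (B2 + R))" by (rule eq_matI) auto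
lemma d_far_8: "dim_row B1 = dim_row A \<Longrightarrow> dim_col B1 = dim_col A \<Longrightarrow> dim_row B2 = dim_row A \<Longrightarrow> dim_col B2 = dim_col A \<Longrightarrow> dim_row R = dim_row A \<Longrightarrow> dim_col R = dim_col A \<Longrightarrow> (- A + (B1 + (B2 + (A + R)))) = (B1 + (B2 + R))" by (rule eq_matI) auto
lemma d_far_9: "dim_row B1 = dim_row A \<Longrightarrow> dim_col B1 = dim_col A \<Longrightarrow> dim_row B2 = dim_row A \<Longrightarrow> dim_col B2 = dim_col A \<Longrightarrow> dim_row B3 = dim_row A \<Longrightarrow> dim_col B3 = dim_col A \<Longrightarrow> (A + (B1 + (B2 + (B3 + - A)))) = (B1 + (B2 + B3))" by (rule eq_matI) auto
lemma d_far_10: "dim_row B1 = dim_row A \<Longrightarrow> dim_col B1 = dim_col A \<Longrightarrow> dim_row B2 = dim_row A \<Longrightarrow> dim_col B2 = dim_col A \<Longrightarrow> dim_row B3 = dim_row A \<Longrightarrow> dim_col B3 = dim_col A \<Longrightarrow> (- A + (B1 + (B2 + (B3 + A)))) = (B1 + (B2 + B3))" by (rule eq_matI) auto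
lemma d_far_11: "dim_row B1 = dim_row A \<Longrightarrow> dim_col B1 = dim_col A \<Longrightarrow> dim_row B2 = dim_row A \<Longrightarrow> dim_col B2 = dim_col A \<Longrightarrow> dim_row B3 = dim_row A \<Longrightarrow> dim_col B3 = dim_col A \<Longrightarrow> dim_row R = dim_row A \<Longrightarrow> dim_col R = dim_col A \<Longrightarrow> (A + (B1 + (B2 + (B3 + (- A + R))))) = (B1 + (B2 + (B3 + R)))" by (rule eq_matI) auto
lemma d_far_12: "dim_row B1 = dim_row A \<Longrightarrow> dim_col B1 = dim_col A \<Longrightarrow> dim_row B2 = dim_row A \<Longrightarrow> dim_col B2 = dim_col A \<Longrightarrow> dim_row B3 = dim_row A \<Longrightarrow> dim_col B3 = dim_col A \<Longrightarrow> dim_row R = dim_row A \<Longrightarrow> dim_col R = dim_col A \<Longrightarrow> (- A + (B1 + (B2 + (B3 + (A + R))))) = (B1 + (B2 + (B3 + R)))" by (rule eq_matI) auto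
lemma d_far_13: "dim_row B1 = dim_row A \<Longrightarrow> dim_col B1 = dim_col A \<Longrightarrow> dim_row B2 = dim_row A \<Longrightarrow> dim_col B2 = dim_col A \<Longrightarrow> dim_row B3 = dim_row A \<Longrightarrow> dim_col B3 = dim_col A \<Longrightarrow> dim_row B4 = dim_row A \<Longrightarrow> dim_col B4 = dim_col A \<Longrightarrow> (A + (B1 + (B2 + (B3 + (B4 + - A))))) = (B1 + (B2 + (B3 + B4)))" by (rule eq_matI) auto
lemma d_far_14: "dim_row B1 = dim_row A \<Longrightarrow> dim_col B1 = dim_col A \<Longrightarrow> dim_row B2 = dim_row A \<Longrightarrow> dim_col B2 = dim_col A \<Longrightarrow> dim_row B3 = dim_row A \<Longrightarrow> dim_col B3 = dim_col A \<Longrightarrow> dim_row B4 = dim_row A \<Longrightarrow> dim_col B4 = dim_col A \<Longrightarrow> (- A + (B1 + (B2 + (B3 + (B4 + A))))) = (B1 + (B2 + (B3 + B4)))" by (rule eq_matI) auto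
lemma d_far_15: "dim_row B1 = dim_row A \<Longrightarrow> dim_col B1 = dim_col A \<Longrightarrow> dim_row B2 = dim_row A \<Longrightarrow> dim_col B2 = dim_col A \<Longrightarrow> dim_row B3 = dim_row A \<Longrightarrow> dim_col B3 = dim_col A \<Longrightarrow> dim_row B4 = dim_row A \<Longrightarrow> dim_col B4 = dim_col A \<Longrightarrow> dim_row R = dim_row A \<Longrightarrow> dim_col R = dim_col A \<Longrightarrow> (A + (B1 + (B2 + (B3 + (B4 + (- A + R)))))) = (B1 + (B2 + (B3 + (B4 + R))))" by (rule eq_matI) auto
lemma d_far_16: "dim_row B1 = dim_row A \<Longrightarrow> dim_col B1 = dim_col A \<Longrightarrow> dim_row B2 = dim_row A \<Longrightarrow> dim_col B2 = dim_col A \<Longrightarrow> dim_row B3 = dim_row A \<Longrightarrow> dim_col B3 = dim_col A \<Longrightarrow> dim_row B4 = dim_row A \<Longrightarrow> dim_col B4 = dim_col A \<Longrightarrow> dim_row R = dim_row A \<Longrightarrow> dim_col R = dim_col A \<Longrightarrow> (- A + (B1 + (B2 + (B3 + (B4 + (A + R)))))) = (B1 + (B2 + (B3 + (B4 + R))))" by (rule eq_matI) auto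
lemma d_far_17: "dim_row B1 = dim_row A \<Longrightarrow> dim_col B1 = dim_col A \<Longrightarrow> dim_row B2 = dim_row A \<Longrightarrow> dim_col B2 = dim_col A \<Longrightarrow> dim_row B3 = dim_row A \<Longrightarrow> dim_col B3 = dim_col A \<Longrightarrow> dim_row B4 = dim_row A \<Longrightarrow> dim_col B4 = dim_col A \<Longrightarrow> dim_row B5 = dim_row A \<Longrightarrow> dim_col B5 = dim_col A \<Longrightarrow> (A + (B1 + (B2 + (B3 + (B4 + (B5 + - A)))))) = (B1 + (B2 + (B3 + (B4 + B5))))" by (rule eq_matI) auto
lemma d_far_18: "dim_row B1 = dim_row A \<Longrightarrow> dim_col B1 = dim_col A \<Longrightarrow> dim_row B2 = dim_row A \<Longrightarrow> dim_col B2 = dim_col A \<Longrightarrow> dim_row B3 = dim_row A \<Longrightarrow> dim_col B3 = dim_col A \<Longrightarrow> dim_row B4 = dim_row A \<Longrightarrow> dim_col B4 = dim_col A \<Longrightarrow> dim_row B5 = dim_row A \<Longrightarrow> dim_col B5 = dim_col A \<Longrightarrow> (- A + (B1 + (B2 + (B3 + (B4 + (B5 + A)))))) = (B1 + (B2 + (B3 + (B4 + B5))))" by (rule eq_matI) auto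
lemma d_far_19: "dim_row B1 = dim_row A \<Longrightarrow> dim_col B1 = dim_col A \<Longrightarrow> dim_row B2 = dim_row A \<Longrightarrow> dim_col B2 = dim_col A \<Longrightarrow> dim_row B3 = dim_row A \<Longrightarrow> dim_col B3 = dim_col A \<Longrightarrow> dim_row B4 = dim_row A \<Longrightarrow> dim_col B4 = dim_col A \<Longrightarrow> dim_row B5 = dim_row A \<Longrightarrow> dim_col B5 = dim_col A \<Longrightarrow> dim_row R = dim_row A \<Longrightarrow> dim_col R = dim_col A \<Longrightarrow> (A + (B1 + (B2 + (B3 + (B4 + (B5 + (- A + R))))))) = (B1 + (B2 + (B3 + (B4 + (B5 + R)))))" by (rule eq_matI) auto
lemma d_far_20: "dim_row B1 = dim_row A \<Longrightarrow> dim_col B1 = dim_col A \<Longrightarrow> dim_row B2 = dim_row A \<Longrightarrow> dim_col B2 = dim_col A \<Longrightarrow> dim_row B3 = dim_row A \<Longrightarrow> dim_col B3 = dim_col A \<Longrightarrow> dim_row B4 = dim_row A \<Longrightarrow> dim_col B4 = dim_col A \<Longrightarrow> dim_row B5 = dim_row A \<Longrightarrow> dim_col B5 = dim_col A \<Longrightarrow> dim_row R = dim_row A \<Longrightarrow> dim_col R = dim_col A \<Longrightarrow> (- A + (B1 + (B2 + (B3 + (B4 + (B5 + (A + R))))))) = (B1 + (B2 + (B3 + (B4 + (B5 + R)))))" by (rule eq_matI) auto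
lemmas d_far = d_far_1 d_far_2 d_far_3 d_far_4 d_far_5 d_far_6 d_far_7 d_far_8 d_far_9 d_far_10 d_far_11 d_far_12 d_far_13 d_far_14 d_far_15 d_far_16 d_far_17 d_far_18 d_far_19 d_far_20
end

lemmas dsimps = index_mult_mat(2,3) index_add_mat(2,3) index_uminus_mat(2,3) index_minus_mat(2,3) simp_thms
lemmas DN = d_assoc d_dl d_dr d_minus d_uml d_umr d_uadd d_comm d_aassoc d_lcomm d_cancel1 d_cancel2 d_cancel3 d_far d_zero d_one d_uu dsimps index_one_mat(2,3) index_zero_mat(2,3)


lemma Vk_carrier[simp]: "Vk n k A C \<alpha> \<in> carrier_mat n k" unfolding Vk_def by simp
lemma Tk_carrier[simp]: "Tk n k A C F \<alpha> \<in> carrier_mat k k" unfolding Tk_def Let_def by simp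

lemma Vk_dims[simp]: "dim_row (Vk n k A C \<alpha>) = n" "dim_col (Vk n k A C \<alpha>) = k" unfolding Vk_def by simp_all
lemma Tk_dims[simp]: "dim_row (Tk n k A C F \<alpha>) = k" "dim_col (Tk n k A C F \<alpha>) = k" unfolding Tk_def Let_def by simp_all
lemma Lam_index[simp]: "i < k \<Longrightarrow> j < k \<Longrightarrow> Lam k \<alpha> $$ (i,j) = (if i = j then \<alpha> i else 0)" unfolding Lam_def by simp
lemma ones_index[simp]: "i < k \<Longrightarrow> j < 1 \<Longrightarrow> ones k $$ (i,j) = 1" unfolding ones_def by simp

lemma sum_delta_l: "i < (k::nat) \<Longrightarrow> (\<Sum>l<k. (if l = i then a else 0) * f l) = (a::complex) * f i"
proof -
  assume i: "i < k"
  have "(\<Sum>l<k. (if l = i then a else 0) * f l) = (\<Sum>l<k. if l = i then a * f i else 0)"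
    by (rule sum.cong) auto
  thus ?thesis using i by simp
qed
lemma sum_delta_r: "i < (k::nat) \<Longrightarrow> (\<Sum>l<k. f l * (if l = i then a else 0)) = f i * (a::complex)"
proof -
  assume i: "i < k"
  have "(\<Sum>l<k. f l * (if l = i then a else 0)) = (\<Sum>l<k. if l = i then f i * a else 0)"
    by (rule sum.cong) auto
  thus ?thesis using i by simp
qed

lemma Tk_index: "i < k \<Longrightarrow> j < k \<Longrightarrow> Tk n k A C F \<alpha> $$ (i,j) =
   (1 + (ctr (Vk n k A C \<alpha>) * F * Vk n k A C \<alpha>) $$ (i,j)) / (cnj (\<alpha> i) + \<alpha> j)"
  unfolding Tk_def Let_def by simp

lemma shift_entry: fixes M Y :: "complex mat" assumes M: "M \<in> carrier_mat n n" and Y: "Y \<in> carrier_mat n 1" and i: "i < n"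
  shows "((- M + c \<cdot>\<^sub>m 1\<^sub>m n) * Y) $$ (i,0) = c * Y $$ (i,0) - (\<Sum>l<n. M $$ (i,l) * Y $$ (l,0))"
proof -
  have dM: "dim_row M = n" "dim_col M = n" using M by auto
  have "((- M + c \<cdot>\<^sub>m 1\<^sub>m n) * Y) $$ (i,0) = (\<Sum>l<n. (- (M $$ (i,l)) + c * (if i = l then 1 else 0)) * Y $$ (l,0))"
    using dM Y i by (auto simp: scalar_prod_def lessThan_atLeast0 intro!: sum.cong)
  also have "\<dots> = (\<Sum>l<n. (if l = i then c * Y $$ (i,0) else 0) + (- (M $$ (i,l) * Y $$ (l,0))))"
    by (rule sum.cong) (use dM i in \<open>auto simp: algebra_simps\<close>)
  also have "\<dots> = (\<Sum>l<n. (if l = i then c * Y $$ (i,0) else 0)) - (\<Sum>l<n. M $$ (i,l) * Y $$ (l,0))"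
    by (simp only: sum.distrib sum_negf) simp
  also have "\<dots> = c * Y $$ (i,0) - (\<Sum>l<n. M $$ (i,l) * Y $$ (l,0))" using i by simp
  finally show ?thesis .
qed

lemma AV_eq:
  assumes A: "A \<in> carrier_mat n n" and C: "C \<in> carrier_mat 1 n"
    and nonsing: "\<forall>j<k. invertible_mat (- ctr A + \<alpha> j \<cdot>\<^sub>m 1\<^sub>m n)"
  shows "ctr A * Vk n k A C \<alpha> = Vk n k A C \<alpha> * Lam k \<alpha> - ctr C * ctr (ones k)"
proof (rule eq_matI)
  let ?V = "Vk n k A C \<alpha>"
  fix i j assume "i < dim_row (?V * Lam k \<alpha> - ctr C * ctr (ones k))" "j < dim_col (?V * Lam k \<alpha> - ctr C * ctr (ones k))"
  hence i: "i < n" and j: "j < k" using C by auto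
  define B where "B = - ctr A + \<alpha> j \<cdot>\<^sub>m 1\<^sub>m n"
  have Bc: "B \<in> carrier_mat n n" unfolding B_def using A by auto
  have Bi: "minv B \<in> carrier_mat n n \<and> B * minv B = 1\<^sub>m n" using minv_inv[OF Bc] nonsing j unfolding B_def by auto
  define Y where "Y = minv B * ctr C"
  have Yc: "Y \<in> carrier_mat n 1" unfolding Y_def using Bi C by auto
  have VY: "l < n \<Longrightarrow> ?V $$ (l,j) = Y $$ (l,0)" for l unfolding Vk_def Y_def B_def using j by simp
  have BY: "B * Y = ctr C" unfolding Y_def
    by (subst assoc_mult_mat[symmetric, OF Bc conjunct1[OF Bi] ctr_carrier[OF C]]) (use Bi C in simp)
  have dA: "dim_row A = n" "dim_col A = n" using A by auto
  have "(ctr A * ?V) $$ (i,j) = (\<Sum>l<n. ctr A $$ (i,l) * Y $$ (l,0))"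
    using dA i j VY by (auto simp: scalar_prod_def lessThan_atLeast0 intro!: sum.cong)
  also have "\<dots> = \<alpha> j * Y $$ (i,0) - (B * Y) $$ (i,0)"
    unfolding B_def using shift_entry[OF ctr_carrier[OF A] Yc i, of "\<alpha> j"] by simp
  also have "\<dots> = \<alpha> j * ?V $$ (i,j) - ctr C $$ (i,0)" using BY VY i by simp
  also have "\<dots> = (?V * Lam k \<alpha> - ctr C * ctr (ones k)) $$ (i,j)"
  proof -
    have "(?V * Lam k \<alpha>) $$ (i,j) = (\<Sum>l<k. ?V $$ (i,l) * (if l = j then \<alpha> j else 0))"
      using i j by (auto simp: scalar_prod_def lessThan_atLeast0 intro!: sum.cong)
    also have "\<dots> = \<alpha> j * ?V $$ (i,j)" using sum_delta_r[OF j] by simp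
    finally show ?thesis using i j C by (simp add: ones_def scalar_prod_def)
  qed
  finally show "(ctr A * ?V) $$ (i,j) = (?V * Lam k \<alpha> - ctr C * ctr (ones k)) $$ (i,j)" .
qed (insert A C, auto)

lemma lyap_eq:
  assumes pos: "\<forall>j<k. 0 < Re (\<alpha> j)"
  shows "ctr (Lam k \<alpha>) * Tk n k A C F \<alpha> + Tk n k A C F \<alpha> * Lam k \<alpha>
     = ctr (Vk n k A C \<alpha>) * F * Vk n k A C \<alpha> + ones k * ctr (ones k)"
proof (rule eq_matI)
  let ?V = "Vk n k A C \<alpha>" and ?T = "Tk n k A C F \<alpha>" and ?G = "ctr (Vk n k A C \<alpha>) * F * Vk n k A C \<alpha>"
  fix i j assume "i < dim_row (?G + ones k * ctr (ones k))" "j < dim_col (?G + ones k * ctr (ones k))"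
  hence i: "i < k" and j: "j < k" by auto
  have Tij: "?T $$ (i,j) = (1 + ?G $$ (i,j)) / (cnj (\<alpha> i) + \<alpha> j)" by (rule Tk_index[OF i j])
  have nz: "cnj (\<alpha> i) + \<alpha> j \<noteq> 0"
  proof
    assume "cnj (\<alpha> i) + \<alpha> j = 0"
    from arg_cong[OF this, of Re] have "Re (\<alpha> i) + Re (\<alpha> j) = 0" by simp
    moreover have "0 < Re (\<alpha> i)" "0 < Re (\<alpha> j)" using pos i j by auto
    ultimately show False by linarith
  qed
  have "(ctr (Lam k \<alpha>) * ?T) $$ (i,j) = (\<Sum>l<k. (if l = i then cnj (\<alpha> i) else 0) * ?T $$ (l,j))"
    using i j by (auto simp: scalar_prod_def lessThan_atLeast0 intro!: sum.cong)
  also have "\<dots> = cnj (\<alpha> i) * ?T $$ (i,j)" using i by (rule sum_delta_l)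
  finally have e1: "(ctr (Lam k \<alpha>) * ?T) $$ (i,j) = cnj (\<alpha> i) * ?T $$ (i,j)" .
  have "(?T * Lam k \<alpha>) $$ (i,j) = (\<Sum>l<k. ?T $$ (i,l) * (if l = j then \<alpha> j else 0))"
    using i j by (auto simp: scalar_prod_def lessThan_atLeast0 intro!: sum.cong)
  also have "\<dots> = ?T $$ (i,j) * \<alpha> j" using j by (rule sum_delta_r)
  finally have e2: "(?T * Lam k \<alpha>) $$ (i,j) = ?T $$ (i,j) * \<alpha> j" .
  have "(ctr (Lam k \<alpha>) * ?T + ?T * Lam k \<alpha>) $$ (i,j) = (cnj (\<alpha> i) + \<alpha> j) * ?T $$ (i,j)"
    using i j e1 e2 by (simp add: algebra_simps)
  also have "\<dots> = 1 + ?G $$ (i,j)" unfolding Tij using nz by simp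
  also have "\<dots> = (?G + ones k * ctr (ones k)) $$ (i,j)" using i j by (simp add: ones_def scalar_prod_def)
  finally show "(ctr (Lam k \<alpha>) * ?T + ?T * Lam k \<alpha>) $$ (i,j) = (?G + ones k * ctr (ones k)) $$ (i,j)" .
qed auto

lemma T_herm: assumes F: "F \<in> carrier_mat n n" and Fh: "ctr F = F"
  shows "ctr (Tk n k A C F \<alpha>) = Tk n k A C F \<alpha>"
proof -
  let ?V = "Vk n k A C \<alpha>" and ?G = "ctr (Vk n k A C \<alpha>) * F * Vk n k A C \<alpha>"
  have Vc: "?V \<in> carrier_mat n k" by simp
  have VF: "ctr ?V * F \<in> carrier_mat k n" by (rule mult_carrier_mat[OF ctr_carrier[OF Vc] F])
  have "ctr ?G = ctr ?V * ctr (ctr ?V * F)" by (rule ctr_mult[OF VF Vc])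
  also have "ctr (ctr ?V * F) = ctr F * ?V" using ctr_mult[OF ctr_carrier[OF Vc] F] by simp
  finally have G: "ctr ?G = ?G" using Fh assoc_mult_mat[OF ctr_carrier[OF Vc] F Vc] by simp
  define G where "G = ?G"
  have Gij: "i < k \<Longrightarrow> j < k \<Longrightarrow> cnj (G $$ (j,i)) = G $$ (i,j)" for i j
  proof -
    assume i: "i < k" and j: "j < k"
    have dG: "dim_row G = k" "dim_col G = k" unfolding G_def by simp_all
    show ?thesis using arg_cong[OF G, of "\<lambda>M. M $$ (i,j)"] i j dG unfolding G_def[symmetric] by simp
  qed
  have Tij: "i < k \<Longrightarrow> j < k \<Longrightarrow> Tk n k A C F \<alpha> $$ (i,j) = (1 + G $$ (i,j)) / (cnj (\<alpha> i) + \<alpha> j)" for i j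
    unfolding G_def by (rule Tk_index)
  show ?thesis
  proof (rule eq_matI)
    fix i j assume "i < dim_row (Tk n k A C F \<alpha>)" "j < dim_col (Tk n k A C F \<alpha>)"
    hence i: "i < k" and j: "j < k" by auto
    have "ctr (Tk n k A C F \<alpha>) $$ (i,j) = cnj (Tk n k A C F \<alpha> $$ (j,i))" using i j by simp
    also have "\<dots> = (1 + G $$ (i,j)) / (cnj (\<alpha> i) + \<alpha> j)"
      unfolding Tij[OF j i] using Gij[OF i j] by (simp add: add.commute)
    finally show "ctr (Tk n k A C F \<alpha>) $$ (i,j) = Tk n k A C F \<alpha> $$ (i,j)" using Tij[OF i j] by simp
  qed auto
qed


lemma (in vec_space) rank_inj:
  assumes A: "A \<in> carrier_mat n nc" and r: "rank A = nc"
    and v: "v \<in> carrier_vec nc" and Av: "A *\<^sub>v v = 0\<^sub>v n"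
  shows "v = 0\<^sub>v nc"
proof -
  have dist: "distinct (cols A)"
  proof (rule ccontr)
    assume nd: "\<not> distinct (cols A)"
    obtain S where S: "maximal S (\<lambda>T. T \<subseteq> set (cols A) \<and> lin_indpt T)"
      using maximal_exists[of "(\<lambda>T. T \<subseteq> set (cols A) \<and> lin_indpt T)" "card (set (cols A))" "{}"]
      by (meson List.finite_set card_mono empty_iff empty_subsetI finite_lin_indpt2 rev_finite_subset)
    then have "card S \<le> card (set (cols A))" by (simp add: card_mono maximal_def)
    moreover have "card (set (cols A)) < nc"
      using nd A card_distinct[of "cols A"] card_length[of "cols A"] by (metis cols_length carrier_matD(2) le_neq_implies_less)
    ultimately have "card S < nc" by simp
    then show False using rank_card_indpt[OF A S] r by simp
  qed
  have li: "lin_indpt (set (cols A))" using full_rank_lin_indpt[OF A r dist] .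
  show ?thesis
  proof (rule ccontr)
    assume "v \<noteq> 0\<^sub>v nc"
    then show False using lin_depI[OF A v _ Av dist] li by simp
  qed
qed

lemma mat_minus_zero_eq: fixes X Y :: "complex mat"
  assumes "X \<in> carrier_mat r c" "Y \<in> carrier_mat r c" "X - Y = 0\<^sub>m r c" shows "X = Y"
proof (rule eq_matI)
  fix i j assume "i < dim_row Y" "j < dim_col Y"
  then show "X $$ (i,j) = Y $$ (i,j)" using arg_cong[OF assms(3), of "\<lambda>M. M $$ (i,j)"] assms(1,2) by simp
qed (use assms in auto)


theorem theorem6p4:
  fixes n k :: nat and A C F :: "complex mat" and \<alpha> :: "nat \<Rightarrow> complex"
  assumes A: "A \<in> carrier_mat n n" and C: "C \<in> carrier_mat 1 n" and F: "F \<in> carrier_mat n n"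
    and F_herm: "ctr F = F"
    and \<alpha>_dist: "\<forall>i<k. \<forall>j<k. i \<noteq> j \<longrightarrow> \<alpha> i \<noteq> \<alpha> j"
    and \<alpha>_pos: "\<forall>j<k. 0 < Re (\<alpha> j)"
    and \<alpha>_nonsing: "\<forall>j<k. invertible_mat (- ctr A + \<alpha> j \<cdot>\<^sub>m 1\<^sub>m n)"
    and A_passive: "\<forall>x \<in> carrier_vec n. x \<noteq> 0\<^sub>v n \<longrightarrow> Re ((A *\<^sub>v x) \<bullet>c x) < 0"
    and F_psd: "\<forall>x \<in> carrier_vec n. 0 \<le> Re ((F *\<^sub>v x) \<bullet>c x)"
    and full_rank: "vec_space.rank n (Vk n k A C \<alpha>) = k"
  defines "V \<equiv> Vk n k A C \<alpha>"
    and "T \<equiv> Tk n k A C F \<alpha>"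
    and "\<Lambda> \<equiv> Lam k \<alpha>"
  defines "X \<equiv> V * minv T * ctr V"
  defines "R \<equiv> ctr C * C + ctr A * X + X * A - X * F * X"
  defines "K \<equiv> minv (ctr V * V) * ctr V * ctr A * V"
    and "g \<equiv> minv (ctr V * V) * ctr V * ctr C"
  shows "(ctr V * R * V = 0\<^sub>m k k \<longleftrightarrow> g = minv T * ones k)
       \<and> (ctr V * R * V = 0\<^sub>m k k \<longleftrightarrow> ctr \<Lambda> * T + T * K - ctr V * F * V = 0\<^sub>m k k)
       \<and> (ctr V * R * V = 0\<^sub>m k k \<longrightarrow>
            char_poly (minv (ctr V * V) * ctr V * (ctr A - V * minv T * ctr V * F) * V)
              = (\<Prod>j<k. [: - (- cnj (\<alpha> j)), 1 :]))"
proof -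
  have Vc: "V \<in> carrier_mat n k" unfolding V_def by simp
  have Tc: "T \<in> carrier_mat k k" unfolding T_def by simp
  have Lc: "\<Lambda> \<in> carrier_mat k k" unfolding \<Lambda>_def by simp
  have oc: "ones k \<in> carrier_mat k 1" by (rule ones_carrier)
  have AV: "ctr A * V = V * \<Lambda> - ctr C * ctr (ones k)"
    unfolding V_def \<Lambda>_def by (rule AV_eq[OF A C \<alpha>_nonsing])
  have lyap: "ctr \<Lambda> * T + T * \<Lambda> = ctr V * F * V + ones k * ctr (ones k)"
    unfolding V_def \<Lambda>_def T_def by (rule lyap_eq[OF \<alpha>_pos])
  have Th: "ctr T = T" unfolding T_def by (rule T_herm[OF F F_herm])
  have Tinj: "x \<in> carrier_vec k \<Longrightarrow> T *\<^sub>v x = 0\<^sub>v k \<Longrightarrow> x = 0\<^sub>v k" for x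
    by (rule T_kernel[OF Tc Th Vc F F_herm F_psd \<alpha>_dist lyap[unfolded \<Lambda>_def]])
  have Ti: "minv T \<in> carrier_mat k k \<and> T * minv T = 1\<^sub>m k \<and> minv T * T = 1\<^sub>m k"
    by (rule minv_det[OF Tc inj_det[OF Tc Tinj]])
  have Vinj: "x \<in> carrier_vec k \<Longrightarrow> V *\<^sub>v x = 0\<^sub>v n \<Longrightarrow> x = 0\<^sub>v k" for x
    using vec_space.rank_inj[OF Vc full_rank[folded V_def]] by blast
  have Wc: "ctr V * V \<in> carrier_mat k k" by (rule mult_carrier_mat[OF ctr_carrier[OF Vc] Vc])
  have Winj: "x = 0\<^sub>v k" if x: "x \<in> carrier_vec k" and Wx: "(ctr V * V) *\<^sub>v x = 0\<^sub>v k" for x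
  proof -
    have Vx: "V *\<^sub>v x \<in> carrier_vec n" using Vc x by simp
    have "(V *\<^sub>v x) \<bullet>c (V *\<^sub>v x) = (ctr V *\<^sub>v (V *\<^sub>v x)) \<bullet>c x"
      using adj_sprod[OF ctr_carrier[OF Vc] Vx x] by simp
    also have "\<dots> = 0" using Wx assoc_mult_mat_vec[OF ctr_carrier[OF Vc] Vc x] x by simp
    finally have "V *\<^sub>v x = 0\<^sub>v n" using Vx by simp
    thus ?thesis using Vinj x by simp
  qed
  have Wi: "minv (ctr V * V) \<in> carrier_mat k k \<and> (ctr V * V) * minv (ctr V * V) = 1\<^sub>m k \<and> minv (ctr V * V) * (ctr V * V) = 1\<^sub>m k"
    by (rule minv_det[OF Wc inj_det[OF Wc Winj]])
  define Ti where "Ti = minv T"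
  define Wi where "Wi = minv (ctr V * V)"
  have Tic: "Ti \<in> carrier_mat k k" and TTi: "T * Ti = 1\<^sub>m k" and TiT: "Ti * T = 1\<^sub>m k" using Ti unfolding Ti_def by auto
  have Wic: "Wi \<in> carrier_mat k k" and WWi: "ctr V * V * Wi = 1\<^sub>m k" and WiW: "Wi * (ctr V * V) = 1\<^sub>m k" using Wi unfolding Wi_def by auto
  have dims: "dim_row V = n" "dim_col V = k" "dim_row T = k" "dim_col T = k" "dim_row \<Lambda> = k" "dim_col \<Lambda> = k"
    "dim_row Ti = k" "dim_col Ti = k" "dim_row Wi = k" "dim_col Wi = k" "dim_row A = n" "dim_col A = n"
    "dim_row C = 1" "dim_col C = n" "dim_row F = n" "dim_col F = n" "dim_row (ones k) = k" "dim_col (ones k) = 1"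
    using carrier_matD[OF Vc] carrier_matD[OF Tc] carrier_matD[OF Lc] carrier_matD[OF Tic] carrier_matD[OF Wic]
      carrier_matD[OF A] carrier_matD[OF C] carrier_matD[OF F] by simp_all
  have iT: "dim_row Y = k \<Longrightarrow> T * (Ti * Y) = Y" "dim_row Y = k \<Longrightarrow> Ti * (T * Y) = Y" for Y
  proof -
    assume "dim_row Y = k"
    hence Yc: "Y \<in> carrier_mat k (dim_col Y)" by (intro carrier_matI) auto
    have "T * (Ti * Y) = (T * Ti) * Y" by (rule assoc_mult_mat[OF Tc Tic Yc, symmetric])
    also have "\<dots> = Y" unfolding TTi by (rule left_mult_one_mat[OF Yc])
    finally show "T * (Ti * Y) = Y" .
    have "Ti * (T * Y) = (Ti * T) * Y" by (rule assoc_mult_mat[OF Tic Tc Yc, symmetric])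
    also have "\<dots> = Y" unfolding TiT by (rule left_mult_one_mat[OF Yc])
    finally show "Ti * (T * Y) = Y" .
  qed
  have iW: "dim_row Y = k \<Longrightarrow> ctr V * (V * (Wi * Y)) = Y" "dim_row Y = k \<Longrightarrow> Wi * (ctr V * (V * Y)) = Y" for Y
  proof -
    assume Y: "dim_row Y = k"
    hence Yc: "Y \<in> carrier_mat k (dim_col Y)" by (intro carrier_matI) auto
    have "ctr V * (V * (Wi * Y)) = (ctr V * V * Wi) * Y" by (simp only: DN dims ctr_dims Y)
    also have "\<dots> = Y" unfolding WWi by (rule left_mult_one_mat[OF Yc])
    finally show "ctr V * (V * (Wi * Y)) = Y" .
    have "Wi * (ctr V * (V * Y)) = (Wi * (ctr V * V)) * Y" by (simp only: DN dims ctr_dims Y)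
    also have "\<dots> = Y" unfolding WiW by (rule left_mult_one_mat[OF Yc])
    finally show "Wi * (ctr V * (V * Y)) = Y" .
  qed
  have r1X: "dim_row Y = k \<Longrightarrow> ctr A * (V * Y) = V * (\<Lambda> * Y) - ctr C * (ctr (ones k) * Y)" for Y
  proof -
    assume Y: "dim_row Y = k"
    have "ctr A * (V * Y) = (ctr A * V) * Y" by (simp only: DN dims Y ctr_dims)
    also have "\<dots> = (V * \<Lambda> - ctr C * ctr (ones k)) * Y" unfolding AV ..
    also have "\<dots> = V * (\<Lambda> * Y) - ctr C * (ctr (ones k) * Y)"
      by (simp only: DN dims Y ctr_dims)
    finally show ?thesis .
  qed
  have AVh: "ctr V * A = ctr \<Lambda> * ctr V - ones k * C"
  proof -
    have "ctr (ctr A * V) = ctr V * A" using ctr_mult[OF ctr_carrier[OF A] Vc] by simp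
    moreover have "ctr (V * \<Lambda> - ctr C * ctr (ones k)) = ctr \<Lambda> * ctr V - ones k * C"
      using ctr_minus[OF mult_carrier_mat[OF Vc Lc] mult_carrier_mat[OF ctr_carrier[OF C] ctr_carrier[OF oc]]]
        ctr_mult[OF Vc Lc] ctr_mult[OF ctr_carrier[OF C] ctr_carrier[OF oc]] by simp
    ultimately show ?thesis using AV by simp
  qed
  have r2X: "dim_row Y = n \<Longrightarrow> ctr V * (A * Y) = ctr \<Lambda> * (ctr V * Y) - ones k * (C * Y)" for Y
  proof -
    assume Y: "dim_row Y = n"
    have "ctr V * (A * Y) = (ctr V * A) * Y" by (simp only: DN dims Y ctr_dims)
    also have "\<dots> = (ctr \<Lambda> * ctr V - ones k * C) * Y" unfolding AVh ..
    also have "\<dots> = ctr \<Lambda> * (ctr V * Y) - ones k * (C * Y)"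
      by (simp only: DN dims Y ctr_dims)
    finally show ?thesis .
  qed
  have G: "ctr V * (F * V) = ctr \<Lambda> * T + T * \<Lambda> - ones k * ctr (ones k)"
  proof -
    have "ctr V * (F * V) = ctr V * F * V" by (simp only: DN dims ctr_dims)
    also have "\<dots> = ctr \<Lambda> * T + T * \<Lambda> - ones k * ctr (ones k)"
      using lyap Vc F Tc Lc by (simp only: DN dims ctr_dims)
    finally show ?thesis .
  qed
  have r3X: "dim_row Y = k \<Longrightarrow> ctr V * (F * (V * Y)) = ctr \<Lambda> * (T * Y) + T * (\<Lambda> * Y) - ones k * (ctr (ones k) * Y)" for Y
  proof -
    assume Y: "dim_row Y = k"
    have "ctr V * (F * (V * Y)) = (ctr V * (F * V)) * Y" by (simp only: DN dims Y ctr_dims)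
    also have "\<dots> = (ctr \<Lambda> * T + T * \<Lambda> - ones k * ctr (ones k)) * Y" unfolding G ..
    also have "\<dots> = ctr \<Lambda> * (T * Y) + T * (\<Lambda> * Y) - ones k * (ctr (ones k) * Y)"
      by (simp only: DN dims Y ctr_dims)
    finally show ?thesis .
  qed
  note rules = DN dims ctr_dims iT iW r1X r2X r3X AV AVh G
  define u where "u = ctr V * ctr C - ctr V * V * (Ti * ones k)"
  have C1: "ctr V * R * V = u * (C * V - ctr (ones k) * (Ti * (ctr V * V)))"
    unfolding R_def X_def u_def Ti_def[symmetric] by (simp only: rules)
  have C2: "ctr \<Lambda> * T + T * K - ctr V * F * V = (ones k - T * g) * ctr (ones k)"
    unfolding K_def g_def Wi_def[symmetric] by (simp only: rules)
  have C3: "Wi * ctr V * (ctr A - V * Ti * ctr V * F) * V - Ti * (ctr \<Lambda> * T + T * K - ctr V * F * V)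
     = - (Ti * (ctr \<Lambda> * T))"
    unfolding K_def Wi_def[symmetric] by (simp only: rules)
  have ctr_one: "ctr (1\<^sub>m k) = (1\<^sub>m k :: complex mat)" by (rule eq_matI) auto
  have Tih: "ctr Ti = Ti"
  proof -
    have "ctr (T * Ti) = ctr Ti * T" using ctr_mult[OF Tc Tic] Th by simp
    hence cT: "ctr Ti * T = 1\<^sub>m k" using TTi ctr_one by simp
    have "ctr Ti = ctr Ti * (T * Ti)" using TTi Tic by simp
    also have "\<dots> = (ctr Ti * T) * Ti" using Tic Tc by (simp add: assoc_mult_mat[OF ctr_carrier[OF Tic] Tc Tic])
    also have "\<dots> = Ti" using cT Tic by simp
    finally show ?thesis .
  qed
  have uc: "u \<in> carrier_mat k 1" unfolding u_def
    by (rule minus_carrier_mat[OF mult_carrier_mat[OF Wc mult_carrier_mat[OF Tic oc]]])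
  have cu: "ctr u = C * V - ctr (ones k) * (Ti * (ctr V * V))"
  proof -
    have "ctr u = ctr (ctr V * ctr C) - ctr (ctr V * V * (Ti * ones k))"
      unfolding u_def by (rule ctr_minus) (use Vc C Tic in auto)
    also have "ctr (ctr V * ctr C) = C * V" using ctr_mult[OF ctr_carrier[OF Vc] ctr_carrier[OF C]] by simp
    also have "ctr (ctr V * V * (Ti * ones k)) = ctr (Ti * ones k) * ctr (ctr V * V)"
      by (rule ctr_mult) (use Vc Tic in auto)
    also have "ctr (Ti * ones k) = ctr (ones k) * ctr Ti" by (rule ctr_mult) (use Tic in auto)
    also have "ctr (ctr V * V) = ctr V * V" using ctr_mult[OF ctr_carrier[OF Vc] Vc] by simp
    finally show ?thesis unfolding Tih by (simp only: rules)
  qed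
  have VRV: "ctr V * R * V = u * ctr u" unfolding C1 cu ..
  have P0: "ctr V * R * V = 0\<^sub>m k k \<longleftrightarrow> u = 0\<^sub>m k 1"
  proof
    assume "u = 0\<^sub>m k 1"
    thus "ctr V * R * V = 0\<^sub>m k k" unfolding VRV by (intro eq_matI) (auto simp: scalar_prod_def)
  next
    assume z: "ctr V * R * V = 0\<^sub>m k k"
    show "u = 0\<^sub>m k 1"
    proof (rule eq_matI)
      fix i j assume "i < dim_row (0\<^sub>m k 1 :: complex mat)" "j < dim_col (0\<^sub>m k 1 :: complex mat)"
      hence i: "i < k" and j0: "j = 0" by auto
      have "(u * ctr u) $$ (i,i) = u $$ (i,0) * cnj (u $$ (i,0))"
        using uc i by (simp add: scalar_prod_def)
      moreover have "(u * ctr u) $$ (i,i) = 0" using z VRV i by simp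
      ultimately have "u $$ (i,0) * cnj (u $$ (i,0)) = 0" by simp
      hence "u $$ (i,0) = 0" by simp
      thus "u $$ (i,j) = 0\<^sub>m k 1 $$ (i,j)" using i j0 by simp
    qed (use uc in auto)
  qed
  have gc: "g \<in> carrier_mat k 1" unfolding g_def Wi_def[symmetric]
    by (rule mult_carrier_mat[OF mult_carrier_mat[OF Wic ctr_carrier[OF Vc]] ctr_carrier[OF C]])
  have Tio: "Ti * ones k \<in> carrier_mat k 1" by (rule mult_carrier_mat[OF Tic oc])
  have P1: "u = 0\<^sub>m k 1 \<longleftrightarrow> g = Ti * ones k"
  proof
    assume u0: "u = 0\<^sub>m k 1"
    have "Wi * u = g - Ti * ones k" unfolding u_def g_def Wi_def[symmetric] by (simp only: rules)
    hence "g - Ti * ones k = 0\<^sub>m k 1" using u0 Wic by simp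
    thus "g = Ti * ones k" by (rule mat_minus_zero_eq[OF gc Tio])
  next
    assume g0: "g = Ti * ones k"
    have "u = ctr V * V * (g - Ti * ones k)" unfolding u_def g_def Wi_def[symmetric] by (simp only: rules)
    also have "g - Ti * ones k = 0\<^sub>m k 1" unfolding g0 using Tio by simp
    finally show "u = 0\<^sub>m k 1" using Vc by simp
  qed
  define E where "E = ctr \<Lambda> * T + T * K - ctr V * F * V"
  have P2: "E = 0\<^sub>m k k \<longleftrightarrow> g = Ti * ones k"
  proof
    assume E0: "E = 0\<^sub>m k k"
    define d where "d = ones k - T * g"
    have dc: "d \<in> carrier_mat k 1" unfolding d_def by (rule minus_carrier_mat[OF mult_carrier_mat[OF Tc gc]])
    have d0: "d = 0\<^sub>m k 1"
    proof (rule eq_matI)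
      fix i j assume "i < dim_row (0\<^sub>m k 1 :: complex mat)" "j < dim_col (0\<^sub>m k 1 :: complex mat)"
      hence i: "i < k" and j0: "j = 0" by auto
      have "(d * ctr (ones k)) $$ (i,0) = d $$ (i,0)" using dc i by (simp add: scalar_prod_def)
      moreover have "(d * ctr (ones k)) $$ (i,0) = 0" using E0 C2 i unfolding E_def d_def by simp
      ultimately show "d $$ (i,j) = 0\<^sub>m k 1 $$ (i,j)" using i j0 by simp
    qed (use dc in auto)
    have "Ti * d = Ti * ones k - g" unfolding d_def by (simp only: rules carrier_matD[OF gc])
    hence "Ti * ones k - g = 0\<^sub>m k 1" using d0 Tic by simp
    thus "g = Ti * ones k" using mat_minus_zero_eq[OF Tio gc] by simp
  next
    assume g0: "g = Ti * ones k"
    have "ones k - T * g = 0\<^sub>m k 1" unfolding g0 by (simp only: rules)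
    thus "E = 0\<^sub>m k k" unfolding E_def C2 by simp
  qed
  have I: "ctr V * R * V = 0\<^sub>m k k \<longleftrightarrow> g = minv T * ones k" using P0 P1 unfolding Ti_def by simp
  have II: "ctr V * R * V = 0\<^sub>m k k \<longleftrightarrow> ctr \<Lambda> * T + T * K - ctr V * F * V = 0\<^sub>m k k"
    using P0 P1 P2 unfolding E_def by simp
  have III: "ctr V * R * V = 0\<^sub>m k k \<longrightarrow>
            char_poly (minv (ctr V * V) * ctr V * (ctr A - V * minv T * ctr V * F) * V)
              = (\<Prod>j<k. [: - (- cnj (\<alpha> j)), 1 :])"
  proof
    assume "ctr V * R * V = 0\<^sub>m k k"
    hence E0: "E = 0\<^sub>m k k" using P0 P1 P2 by simp
    define M where "M = minv (ctr V * V) * ctr V * (ctr A - V * minv T * ctr V * F) * V"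
    have M': "M = Wi * ctr V * (ctr A - V * Ti * ctr V * F) * V" unfolding M_def Wi_def Ti_def ..
    have c1: "V * Ti * ctr V * F \<in> carrier_mat n n"
      by (rule mult_carrier_mat[OF mult_carrier_mat[OF mult_carrier_mat[OF Vc Tic] ctr_carrier[OF Vc]] F])
    have c2: "ctr A - V * Ti * ctr V * F \<in> carrier_mat n n" by (rule minus_carrier_mat[OF c1])
    have Mc: "M \<in> carrier_mat k k" unfolding M'
      by (rule mult_carrier_mat[OF mult_carrier_mat[OF mult_carrier_mat[OF Wic ctr_carrier[OF Vc]] c2] Vc])
    have "M - Ti * E = - (Ti * (ctr \<Lambda> * T))" unfolding M' E_def by (rule C3)
    moreover have "M - Ti * E = M"
    proof -
      have "Ti * E = 0\<^sub>m k k" unfolding E0 using carrier_matD[OF Tic] by simp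
      moreover have "M - 0\<^sub>m k k = M" by (rule eq_matI) (use carrier_matD[OF Mc] in simp_all)
      ultimately show ?thesis by simp
    qed
    ultimately have MM: "M = - (Ti * (ctr \<Lambda> * T))" by simp
    have MM2: "M = Ti * (- ctr \<Lambda>) * T" unfolding MM by (simp only: rules)
    have Lmc: "- ctr \<Lambda> \<in> carrier_mat k k" using Lc by simp
    have "similar_mat_wit M (- ctr \<Lambda>) Ti T"
      unfolding similar_mat_wit_def Let_def carrier_matD(1)[OF Mc] using Mc Lmc Tic Tc TiT TTi MM2 by simp
    hence sim: "similar_mat M (- ctr \<Lambda>)" unfolding similar_mat_def by blast
    have ut: "upper_triangular (- ctr \<Lambda>)"
      unfolding upper_triangular_def using Lc by (auto simp: \<Lambda>_def)
    have diag: "diag_mat (- ctr \<Lambda>) = map (\<lambda>j. - cnj (\<alpha> j)) [0..<k]"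
      unfolding diag_mat_def using Lc by (auto simp: \<Lambda>_def)
    have "char_poly M = char_poly (- ctr \<Lambda>)" by (rule char_poly_similar[OF sim])
    also have "\<dots> = (\<Prod>a \<leftarrow> diag_mat (- ctr \<Lambda>). [:- a, 1:])"
      by (rule char_poly_upper_triangular[OF Lmc ut])
    also have "\<dots> = (\<Prod>j<k. [: - (- cnj (\<alpha> j)), 1 :])"
      unfolding diag map_map o_def by (rule prod_list_upt)
    finally show "char_poly (minv (ctr V * V) * ctr V * (ctr A - V * minv T * ctr V * F) * V)
              = (\<Prod>j<k. [: - (- cnj (\<alpha> j)), 1 :])" unfolding M_def .
  qed
  show ?thesis using I II III by blast
qed


end
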